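(* Let $p$ be a prime and $e \ge 1$. Then $A_{p^e}$ is the $p \times p$ block matrix (each block of size $p^{e-1}\times p^{e-1}$) \[A_{p^e} = \begin{pmatrix} A_{p^{e-1}} & A_{p^{e-1}} & \cdots & A_{p^{e-1}} & A_{p^{e-1}} \\ I_{p^{e-1}} & 0 & \cdots & 0 & -I_{p^{e-1}} \\ 0 & I_{p^{e-1}} & \cdots & 0 & -I_{p^{e-1}} \\ \vdots & & \ddots & & \vdots \\ 0 & 0 & \cdots & I_{p^{e-1}} & -I_{p^{e-1}} \end{pmatrix},\] with $A_1 = (1)$.
   Context: For a positive integer $k$, let $\Phi_d$ denote the $d$th cyclotomic polynomial and let $\Psi_k : \mathbf{Z}[X]/(X^k-1) \to \bigoplus_{d \mid k} \mathbf{Z}[X]/(\Phi_d(X))$ be the natural map $f \bmod (X^k-1) \mapsto \bigoplus_{d\mid k} f \bmod \Phi_d(X)$. Endow $\mathbf{Z}[X]/(X^k-1)$ with the basis $(1, \overline{X}, \dots, \overline{X}^{k-1})$, each $\mathbf{Z}[X]/(\Phi_d(X))$ with the basis $(1, \overline{X}, \dots, \overline{X}^{\phi(d)-1})$, and order the summands of the direct sum by increasing $d$. $A_k$ is the $k\times k$ integer matrix of $\Psi_k$ with respect to these bases (the $j$th column is the coordinate vector of $\Psi_k(\overline{X}^{j})$). $I_r$ is the $r\times r$ identity matrix. *)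

theory Defs
  imports "HOL-Computational_Algebra.Polynomial" "HOL-Number_Theory.Totient"
    "Jordan_Normal_Form.Matrix" Complex_Main
begin

definition cyclotomic_C :: "nat \<Rightarrow> complex poly" where
  "cyclotomic_C d = (\<Prod>k\<in>{k. k < d \<and> coprime k d}. [:- cis (2 * pi * real k / real d), 1:])"

definition cyclotomic :: "nat \<Rightarrow> int poly" where
  "cyclotomic d = (THE q. map_poly of_int q = cyclotomic_C d)"

(* coordinate vector of X^j mod Phi_d w.r.t. the basis 1, X, ..., X^(phi(d)-1) of Z[X]/(Phi_d) *)
definition coords :: "nat \<Rightarrow> nat \<Rightarrow> int list" where
  "coords d j = (THE c. length c = totient d \<and> cyclotomic d dvd (monom 1 j - Poly c))"

(* coordinate vector of Psi_k(X^j): summands ordered by increasing divisor d of k *)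
definition Psi_col :: "nat \<Rightarrow> nat \<Rightarrow> int list" where
  "Psi_col k j = concat (map (\<lambda>d. coords d j) (sorted_list_of_set {d. d dvd k}))"

definition A_mat :: "nat \<Rightarrow> int mat" where
  "A_mat k = mat k k (\<lambda>(i, j). Psi_col k j ! i)"

end

theory Submission imports Defs begin

lemma coeff_sum_monom:
  fixes m s N i :: nat assumes "s < m"
  shows "coeff (\<Sum>b<N. monom (1::'a::comm_ring_1) (b*m+s)) i = (if i mod m = s \<and> i div m < N then 1 else 0)"
proof -
  have "coeff (\<Sum>b<N. monom (1::'a) (b*m+s)) i = (\<Sum>b<N. if b = i div m then (if i mod m = s then 1 else 0) else 0)"
    unfolding coeff_sum coeff_monom
  proof (rule sum.cong[OF refl])
    fix b assume "b \<in> {..<N}"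
    have "(b*m+s = i) = (b = i div m \<and> i mod m = s)"
    proof
      assume h: "b*m+s = i" then show "b = i div m \<and> i mod m = s" using assms by auto
    next
      assume "b = i div m \<and> i mod m = s" then show "b*m+s = i" by (metis div_mult_mod_eq)
    qed
    then show "(if b * m + s = i then 1::'a else 0) = (if b = i div m then if i mod m = s then 1 else 0 else 0)" by auto
  qed
  also have "\<dots> = (if i mod m = s \<and> i div m < N then 1 else 0)"
    by (subst sum.delta) auto
  finally show ?thesis .
qed

definition Qp :: "nat \<Rightarrow> nat \<Rightarrow> 'a::comm_ring_1 poly" where
  "Qp N m = (\<Sum>b<N. monom 1 (b*m))"

lemma coeff_Qp: "0 < m \<Longrightarrow> coeff (Qp N m :: 'a::comm_ring_1 poly) i = (if i mod m = 0 \<and> i div m < N then 1 else 0)"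
  using coeff_sum_monom[of 0 m N i] by (simp add: Qp_def)

lemma degree_Qp: assumes "0 < m" "0 < N" shows "degree (Qp N m :: 'a::comm_ring_1 poly) = (N - 1) * m"
proof (rule antisym)
  show "degree (Qp N m :: 'a poly) \<le> (N - 1) * m"
  proof (rule degree_le, intro allI impI)
    fix i assume i: "(N - 1) * m < i"
    have "\<not> (i mod m = 0 \<and> i div m < N)"
    proof
      assume h: "i mod m = 0 \<and> i div m < N"
      then have "i = (i div m) * m" by (metis add_0_right div_mult_mod_eq)
      also have "\<dots> \<le> (N - 1) * m" using h by (intro mult_right_mono) auto
      finally show False using i by simp
    qed
    then show "coeff (Qp N m :: 'a poly) i = 0" by (subst coeff_Qp[OF assms(1)]) (simp only: if_False)
  qed
  show "(N - 1) * m \<le> degree (Qp N m :: 'a poly)"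
    by (rule le_degree) (use assms in \<open>simp add: coeff_Qp\<close>)
qed

lemma lead_Qp: assumes "0 < m" "0 < N" shows "lead_coeff (Qp N m :: 'a::comm_ring_1 poly) = 1"
  using assms by (simp add: degree_Qp coeff_Qp)

lemma map_Qp: "0 < m \<Longrightarrow> map_poly of_int (Qp N m) = (Qp N m :: 'a::comm_ring_1 poly)"
  by (rule poly_eqI) (simp add: coeff_map_poly coeff_Qp)

lemma poly_Qp: "poly (Qp N m) z = (\<Sum>b<N. z ^ (b*m))"
  by (simp add: Qp_def poly_sum poly_monom)

lemma prod_linear_dvd:
  fixes z :: "nat \<Rightarrow> 'a::idom"
  assumes "finite A" "inj_on z A" "\<And>k. k \<in> A \<Longrightarrow> poly P (z k) = 0"
  shows "(\<Prod>k\<in>A. [:- z k, 1:]) dvd P"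
  using assms
proof (induction A arbitrary: P rule: finite_induct)
  case empty then show ?case by simp
next
  case (insert a A)
  from insert.prems(2) have "[:- z a, 1:] dvd P" by (simp add: poly_eq_0_iff_dvd[symmetric])
  then obtain P' where P': "P = [:- z a, 1:] * P'" by (elim dvdE)
  have "(\<Prod>k\<in>A. [:- z k, 1:]) dvd P'"
  proof (rule insert.IH)
    show "inj_on z A" using insert.prems(1) by (simp add: inj_on_insert)
    fix k assume k: "k \<in> A"
    then have "z k \<noteq> z a" using insert.prems(1) insert.hyps(2) by (auto simp: inj_on_def)
    moreover have "poly P (z k) = 0" using k insert.prems(2) by simp
    ultimately show "poly P' (z k) = 0" using P' by simp
  qed
  then have "[:- z a, 1:] * (\<Prod>k\<in>A. [:- z k, 1:]) dvd [:- z a, 1:] * P'" by (rule mult_dvd_mono[OF dvd_refl])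
  then show ?case using P' insert.hyps by (subst prod.insert) auto
qed

lemma monic_dvd_eq:
  fixes P Q :: "'a::field poly"
  assumes "P dvd Q" "degree P = degree Q" "lead_coeff P = 1" "lead_coeff Q = 1"
  shows "P = Q"
proof -
  obtain R where R: "Q = P * R" using assms(1) by (elim dvdE)
  have "Q \<noteq> 0" "P \<noteq> 0" using assms(3,4) by auto
  then have "R \<noteq> 0" using R by auto
  then have "degree R = 0" using R \<open>P \<noteq> 0\<close> assms(2) by (simp add: degree_mult_eq)
  then have "R = [:coeff R 0:]" by (rule degree_0_id[symmetric])
  moreover have "lead_coeff R = 1" using R assms(3,4) by (simp add: lead_coeff_mult)
  ultimately have "R = 1" using \<open>degree R = 0\<close> by (metis one_pCons)
  then show ?thesis using R by simp
qed

lemma card_coprime_lt: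
  assumes "d > 1" shows "card {k. k < d \<and> coprime k d} = totient d"
proof -
  have "{k. k < d \<and> coprime k d} = totatives d"
  proof (auto simp: totatives_def)
    fix x assume "x < d" "coprime x d"
    then show "0 < x" using assms by (cases "x = 0") auto
  next
    fix x assume "0 < x" "x \<le> d" "coprime x d"
    then show "x < d" using assms by (cases "x = d") auto
  qed
  then show ?thesis by (simp add: totient_def)
qed

lemma root_prim:
  fixes p k :: nat
  assumes "prime p" "\<not> p dvd k"
  shows "(\<Sum>b<p. cis (2 * pi * real k / real p) ^ b) = 0"
proof -
  define w where "w = cis (2 * pi * real k / real p)"
  have p0: "p > 0" using assms prime_gt_0_nat by blast
  have "w ^ p = cis (real p * (2 * pi * real k / real p))" by (simp add: w_def DeMoivre)
  also have "\<dots> = cis (2 * pi * real k)" using p0 by simp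
  also have "\<dots> = 1" by (rule cis_multiple_2pi) simp
  finally have wp: "w ^ p = 1" .
  have "real k = real (k div p) * real p + real (k mod p)"
    by (metis div_mult_mod_eq of_nat_add of_nat_mult)
  then have "2 * pi * real k / real p = 2 * pi * real (k mod p) / real p + 2 * pi * real (k div p)"
    using p0 by (simp add: field_simps)
  then have "w = cis (2 * pi * real (k mod p) / real p + 2 * pi * real (k div p))"
    by (simp add: w_def)
  also have "\<dots> = cis (2 * pi * real (k mod p) / real p) * cis (2 * pi * real (k div p))"
    by (rule cis_mult[symmetric])
  also have "cis (2 * pi * real (k div p)) = 1" by (rule cis_multiple_2pi) simp
  finally have w': "w = cis (2 * pi * real (k mod p) / real p)" by simp
  have "w \<noteq> 1"
  proof
    assume "w = 1"
    then have "cis (2 * pi * real (k mod p) / real p) = cis (2 * pi * real 0 / real p)"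
      using w' by simp
    moreover have "inj_on (\<lambda>k. cis (2 * pi * real k / real p)) {..<p}"
      using bij_betw_roots_unity[OF p0] by (simp add: bij_betw_def)
    ultimately have "k mod p = 0" using p0 by (auto simp: inj_on_def)
    then show False using assms(2) by (simp add: dvd_eq_mod_eq_0)
  qed
  then have "(\<Sum>b<p. w ^ b) = (w ^ p - 1) / (w - 1)" by (rule geometric_sum)
  then show ?thesis using wp by (simp add: w_def)
qed

lemma cycC_pp:
  fixes p f :: nat
  assumes "prime p" "f \<ge> 1"
  shows "cyclotomic_C (p ^ f) = Qp p (p ^ (f - 1))"
proof -
  define d where "d = p ^ f"
  define m where "m = p ^ (f - 1)"
  define S where "S = {k. k < d \<and> coprime k d}"
  define z where "z = (\<lambda>k::nat. cis (2 * pi * real k / real d))"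
  have p1: "p > 1" using assms prime_gt_1_nat by blast
  have m0: "m > 0" using p1 by (simp add: m_def)
  have dm: "d = p * m" using assms by (simp add: d_def m_def power_eq_if)
  have d1: "d > 1" using p1 assms unfolding d_def by (intro one_less_power) auto
  have cC: "cyclotomic_C d = (\<Prod>k\<in>S. [:- z k, 1:])" by (simp add: cyclotomic_C_def S_def z_def)
  have finS: "finite S" by (simp add: S_def)
  have injS: "inj_on z S"
    using bij_betw_roots_unity[of d] d1 unfolding bij_betw_def z_def S_def
    by (auto intro: inj_on_subset)
  have roots: "poly (Qp p m) (z k) = 0" if k: "k \<in> S" for k
  proof -
    have "\<not> p dvd k"
    proof
      assume "p dvd k"
      moreover have "p dvd d" using assms by (simp add: d_def)
      moreover have "coprime k d" using k by (simp add: S_def)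
      ultimately have "p = 1" using coprime_common_divisor_nat by blast
      then show False using p1 by simp
    qed
    have "z k ^ m = cis (real m * (2 * pi * real k / real d))" by (simp add: z_def DeMoivre)
    also have "real m * (2 * pi * real k / real d) = 2 * pi * real k / real p"
      using dm m0 p1 by (simp add: field_simps)
    finally have zm: "z k ^ m = cis (2 * pi * real k / real p)" .
    have "poly (Qp p m) (z k) = (\<Sum>b<p. (z k ^ m) ^ b)"
      unfolding poly_Qp by (simp add: power_mult[symmetric] mult.commute)
    also have "\<dots> = 0" unfolding zm by (rule root_prim[OF assms(1) \<open>\<not> p dvd k\<close>])
    finally show ?thesis .
  qed
  have dvd: "(\<Prod>k\<in>S. [:- z k, 1:]) dvd Qp p m"
    by (rule prod_linear_dvd[OF finS injS roots])
  have degP: "degree (\<Prod>k\<in>S. [:- z k, 1:]) = card S"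
    by (subst degree_prod_eq_sum_degree) auto
  have "card S = totient d" unfolding S_def by (rule card_coprime_lt[OF d1])
  also have "\<dots> = m * (p - 1)" using totient_prime_power[OF assms(1)] assms by (simp add: d_def m_def)
  finally have cS: "card S = m * (p - 1)" .
  have "(\<Prod>k\<in>S. [:- z k, 1:]) = Qp p m"
  proof (rule monic_dvd_eq[OF dvd])
    show "degree (\<Prod>k\<in>S. [:- z k, 1:]) = degree (Qp p m :: complex poly)"
      using degP cS degree_Qp[OF m0, of p, where 'a=complex] p1 by (simp add: mult.commute)
    show "lead_coeff (\<Prod>k\<in>S. [:- z k, 1:]) = 1" by (simp add: lead_coeff_prod)
    show "lead_coeff (Qp p m :: complex poly) = 1" using lead_Qp[OF m0, of p] p1 by simp
  qed
  then show ?thesis using cC by (simp add: d_def m_def)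
qed

lemma cyc_eqI:
  assumes "cyclotomic_C d = map_poly of_int Q" shows "cyclotomic d = Q"
  unfolding cyclotomic_def
proof (rule the_equality)
  show "map_poly of_int Q = cyclotomic_C d" using assms by simp
  fix q assume "map_poly of_int q = cyclotomic_C d"
  then have "map_poly (of_int :: int \<Rightarrow> complex) q = map_poly of_int Q" using assms by simp
  then show "q = Q"
    by (intro poly_eqI) (metis coeff_map_poly of_int_0 of_int_eq_iff)
qed

lemma cyc_1: "cyclotomic 1 = [:-1, 1:]"
proof (rule cyc_eqI)
  have "{k::nat. k < 1 \<and> coprime k 1} = {0}" by auto
  then show "cyclotomic_C 1 = map_poly of_int [:-1, 1:]"
    by (simp add: cyclotomic_C_def) (rule poly_eqI, simp add: coeff_map_poly coeff_pCons split: nat.split)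
qed

lemma cyc_pp:
  assumes "prime p" "f \<ge> 1" shows "cyclotomic (p ^ f) = Qp p (p ^ (f - 1))"
  apply (rule cyc_eqI)
  apply (subst map_Qp)
  using assms prime_gt_0_nat apply simp
  by (rule cycC_pp[OF assms])

lemma coords_eqI:
  assumes "cyclotomic d = Q" "Q \<noteq> 0" "degree Q = totient d" "length c = totient d"
    "Q dvd (monom 1 j - Poly c)"
  shows "coords d j = c"
  unfolding coords_def
proof (rule the_equality)
  show "length c = totient d \<and> cyclotomic d dvd monom 1 j - Poly c" using assms by simp
  fix c' assume c': "length c' = totient d \<and> cyclotomic d dvd monom 1 j - Poly c'"
  have "Q dvd (monom 1 j - Poly c) - (monom 1 j - Poly c')" using c' assms by (intro dvd_diff[of Q "monom 1 j - Poly c"]) auto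
  moreover have "(monom 1 j - Poly c) - (monom 1 j - Poly c') = Poly c' - Poly c" by (simp add: algebra_simps)
  ultimately have dv: "Q dvd Poly c' - Poly c" by simp
  have "Poly c' - Poly c = 0"
  proof (rule ccontr)
    assume ne: "Poly c' - Poly c \<noteq> 0"
    have "degree Q \<le> degree (Poly c' - Poly c)" by (rule dvd_imp_degree[OF dv assms(2) ne])
    moreover have "degree (Poly c' - Poly c) < totient d"
    proof -
      have "coeff (Poly c' - Poly c) i = 0" if "i \<ge> totient d" for i
        using that c' assms(4) by (simp add: nth_default_def)
      then have "degree (Poly c' - Poly c) < totient d \<or> Poly c' - Poly c = 0"
        by (metis leading_coeff_0_iff not_less)
      then show ?thesis using ne by simp
    qed
    ultimately show False using assms(3) by simp
  qed
  then have "Poly c' = Poly c" by simp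
  then have "\<And>i. nth_default 0 c' i = nth_default 0 c i" by (metis coeff_Poly_eq)
  then show "c' = c" using c' assms(4)
    by (metis nth_equalityI nth_default_nth)
qed

definition cz :: "nat \<Rightarrow> nat \<Rightarrow> nat \<Rightarrow> int list" where
  "cz p f j = (if f = 0 then [1] else (let m = p^(f-1); n = (p-1)*m; j' = j mod (p*m) in
     map (\<lambda>i. if j' < n then (if i = j' then 1 else 0) else (if i mod m = j' - n then -1 else 0)) [0..<n]))"

lemma coords_1: "coords 1 j = [1]"
proof (rule coords_eqI[OF cyc_1])
  show "[:-1, 1:] dvd monom 1 j - Poly [1::int]"
    by (subst poly_eq_0_iff_dvd[symmetric]) (simp add: poly_monom)
qed auto

lemma Qp_dvd_N: "Qp p m dvd (monom 1 (p*m) - 1 :: 'a::comm_ring_1 poly)"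
proof -
  have "Qp p m = (\<Sum>i<p. (monom (1::'a) m) ^ i)" by (simp add: Qp_def monom_power mult.commute)
  then have "monom 1 (p*m) - 1 = (monom (1::'a) m - 1) * Qp p m"
    using power_diff_1_eq[of "monom (1::'a) m" p] by (simp add: monom_power mult.commute)
  then show ?thesis by simp
qed

lemma N_dvd_diff: "(monom 1 N - 1 :: 'a::comm_ring_1 poly) dvd monom 1 j - monom 1 (j mod N)"
proof -
  have "monom 1 j = monom (1::'a) (j mod N) * (monom 1 N) ^ (j div N)"
    by (simp add: monom_power mult_monom)
  then have "monom 1 j - monom 1 (j mod N) = monom (1::'a) (j mod N) * ((monom 1 N) ^ (j div N) - 1)"
    by (simp add: algebra_simps)
  also have "\<dots> = monom (1::'a) (j mod N) * ((monom 1 N - 1) * (\<Sum>i<j div N. (monom 1 N) ^ i))"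
    by (simp add: power_diff_1_eq)
  finally show ?thesis by simp
qed

lemma coords_pp:
  assumes "prime p" "f \<ge> 1"
  shows "coords (p ^ f) j = cz p f j"
proof -
  define m where "m = p ^ (f - 1)"
  define n where "n = (p - 1) * m"
  define j' where "j' = j mod (p * m)"
  define c where "c = map (\<lambda>i. if j' < n then (if i = j' then 1 else 0) else (if i mod m = j' - n then -1 else (0::int))) [0..<n]"
  have p1: "p > 1" using assms prime_gt_1_nat by blast
  have m0: "m > 0" using p1 by (simp add: m_def)
  have czc: "cz p f j = c" using assms by (simp add: cz_def c_def m_def n_def j'_def Let_def)
  have tot: "totient (p ^ f) = n" using totient_prime_power[OF assms(1)] assms by (simp add: n_def m_def mult.commute)
  have j'lt: "j' < p * m" using p1 m0 by (simp add: j'_def)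
  have D3: "Qp p m dvd monom 1 j' - Poly c"
  proof (cases "j' < n")
    case True
    have "Poly c = monom 1 j'"
      by (rule poly_eqI) (use True in \<open>auto simp: c_def nth_default_def coeff_monom\<close>)
    then show ?thesis by simp
  next
    case False
    define s where "s = j' - n"
    have pm: "p * m = n + m" using p1 by (cases p) (auto simp: n_def)
    have sm: "s < m" using j'lt False pm by (simp add: s_def)
    have ndiv: "i < n \<longleftrightarrow> i div m < p - 1" for i
      using m0 by (simp add: n_def less_mult_imp_div_less div_less_iff_less_mult)
    have "Poly c = - (\<Sum>b<p-1. monom 1 (b*m+s))"
    proof (rule poly_eqI)
      fix i
      have "nth_default 0 c i = (if i < n then (if i mod m = s then -1 else 0) else 0)"
        using False by (simp add: c_def nth_default_def s_def)
      then show "coeff (Poly c) i = coeff (- (\<Sum>b<p-1. monom 1 (b*m+s))) i"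
        using ndiv[of i] unfolding coeff_minus coeff_sum_monom[OF sm] coeff_Poly_eq
        by auto
    qed
    then have "monom 1 j' - Poly c = monom 1 ((p-1)*m + s) + (\<Sum>b<p-1. monom 1 (b*m+s))"
      using False by (simp add: s_def n_def)
    also have "\<dots> = (\<Sum>b<p. monom 1 (b*m+s))"
      using p1 by (cases p) (auto simp: add.commute)
    also have "\<dots> = monom 1 s * Qp p m"
      by (simp add: Qp_def sum_distrib_left mult_monom add.commute)
    finally show ?thesis by simp
  qed
  have "Qp p m dvd (monom 1 j - monom 1 j') + (monom 1 j' - Poly c)"
  proof (rule dvd_add[OF _ D3])
    show "Qp p m dvd monom 1 j - monom 1 j'"
      unfolding j'_def by (rule dvd_trans[OF Qp_dvd_N N_dvd_diff])
  qed
  then have dv: "Qp p m dvd monom 1 j - Poly c" by simp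
  have "coords (p ^ f) j = c"
  proof (rule coords_eqI[OF cyc_pp[OF assms]])
    show "Qp p (p ^ (f - 1)) \<noteq> (0 :: int poly)"
      using lead_Qp[OF m0, of p, where 'a=int] p1 by (auto simp: m_def)
    show "degree (Qp p (p ^ (f - 1)) :: int poly) = totient (p ^ f)"
      using degree_Qp[OF m0, of p, where 'a=int] p1 tot by (simp add: m_def n_def)
    show "length c = totient (p ^ f)" using tot by (simp add: c_def)
    show "Qp p (p ^ (f - 1)) dvd monom 1 j - Poly c" using dv by (simp add: m_def)
  qed
  then show ?thesis using czc by simp
qed

lemma divisors_pp:
  fixes p :: nat
  assumes "prime p"
  shows "sorted_list_of_set {d. d dvd p ^ e} = map (\<lambda>f. p ^ f) [0..<Suc e]"
proof -
  have p1: "p > 1" using assms prime_gt_1_nat by blast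
  let ?xs = "map (\<lambda>f. p ^ f) [0..<Suc e]"
  have "set ?xs = {d. d dvd p ^ e}"
  proof (rule Set.set_eqI)
    fix d
    have "d \<in> set ?xs \<longleftrightarrow> (\<exists>i\<le>e. d = p ^ i)"
      unfolding set_map set_upt image_iff atLeastLessThan_iff by (auto simp: less_Suc_eq_le simp del: upt_Suc)
    then show "d \<in> set ?xs \<longleftrightarrow> d \<in> {d. d dvd p ^ e}"
      using divides_primepow_nat[OF assms, of d e] by simp
  qed
  moreover have "distinct ?xs" using p1 by (auto simp: distinct_map inj_on_def)
  moreover have "sorted ?xs"
    unfolding sorted_map
    by (rule sorted_wrt_mono_rel[OF _ sorted_upt]) (use p1 in \<open>auto intro: power_increasing\<close>)
  ultimately show ?thesis
    by (metis sorted_list_of_set_sort_remdups distinct_remdups_id sorted_sort_id)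
qed

definition PC :: "nat \<Rightarrow> nat \<Rightarrow> nat \<Rightarrow> int list" where
  "PC p e j = concat (map (\<lambda>f. cz p f j) [0..<Suc e])"

lemma Psi_col_pp: "prime p \<Longrightarrow> Psi_col (p ^ e) j = PC p e j"
  unfolding Psi_col_def PC_def divisors_pp map_map
proof -
  assume p: "prime p"
  have "coords (p ^ f) j = cz p f j" for f
    by (cases "f = 0") (auto simp: coords_1[simplified] cz_def coords_pp[OF p])
  then show "concat (map ((\<lambda>d. coords d j) \<circ> (\<lambda>f. p ^ f)) [0..<Suc e]) = concat (map (\<lambda>f. cz p f j) [0..<Suc e])"
    by (simp add: o_def)
qed

lemma PC_Suc: "PC p (Suc e) j = PC p e j @ cz p (Suc e) j"
  by (simp add: PC_def)

lemma length_cz: "length (cz p f j) = (if f = 0 then 1 else (p - 1) * p ^ (f - 1))"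
  by (simp add: cz_def Let_def)

lemma length_PC: assumes "p > 0" shows "length (PC p e j) = p ^ e"
proof (induction e)
  case 0 then show ?case by (simp add: PC_def cz_def)
next
  case (Suc e)
  then show ?case using assms by (simp add: PC_Suc length_cz algebra_simps)
qed

lemma cz_mod: assumes "f \<le> g" shows "cz p f (j mod p ^ g) = cz p f j"
proof (cases "f = 0")
  case True then show ?thesis by (simp add: cz_def)
next
  case False
  then have "p * p ^ (f - 1) = p ^ f" by (cases f) auto
  moreover have "p ^ f dvd p ^ g" using assms by (simp add: le_imp_power_dvd)
  ultimately show ?thesis using False by (simp add: cz_def Let_def mod_mod_cancel)
qed

lemma PC_mod: "PC p e (j mod p ^ e) = PC p e j"
  unfolding PC_def by (rule arg_cong[where f=concat], rule map_cong[OF refl]) (auto intro!: cz_mod)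

lemma A_mat_pp: "prime p \<Longrightarrow> A_mat (p ^ e) = mat (p ^ e) (p ^ e) (\<lambda>(i, j). PC p e j ! i)"
  by (simp add: A_mat_def Psi_col_pp)

lemma divmod_eq: "(r::nat) < m \<Longrightarrow> s < m \<Longrightarrow> (x*m + r = y*m + s) \<longleftrightarrow> (x = y \<and> r = s)"
proof
  assume "r < m" "s < m" "x*m + r = y*m + s"
  then have "(x*m + r) div m = (y*m + s) div m" "(x*m + r) mod m = (y*m + s) mod m" by simp_all
  then show "x = y \<and> r = s" using \<open>r < m\<close> \<open>s < m\<close> by simp_all
qed auto

theorem lemma2p5:
  fixes p e :: nat
  assumes "prime p" and "e \<ge> 1"
  shows "A_mat (p ^ e) =
           mat (p ^ e) (p ^ e) (\<lambda>(i, j).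
             let m = p ^ (e - 1); a = i div m; r = i mod m; b = j div m; s = j mod m in
             if a = 0 then A_mat m $$ (r, s)
             else if b + 1 = a then (if r = s then 1 else 0)
             else if b = p - 1 then (if r = s then -1 else 0)
             else 0)
       \<and> A_mat 1 = mat 1 1 (\<lambda>_. 1)"
proof
  have p1: "p > 1" using assms prime_gt_1_nat by blast
  obtain e0 where e: "e = Suc e0" using assms(2) by (cases e) auto
  define m where "m = p ^ e0"
  have m0: "m > 0" using p1 by (simp add: m_def)
  have pe: "p ^ e = p * m" by (simp add: e m_def)
  define n where "n = (p - 1) * m"
  have pm: "p * m = n + m" using p1 by (cases p) (auto simp: n_def)
  have lenm: "length (PC p e0 j) = m" for j using p1 by (simp add: length_PC m_def)
  show "A_mat (p ^ e) =
           mat (p ^ e) (p ^ e) (\<lambda>(i, j).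
             let m = p ^ (e - 1); a = i div m; r = i mod m; b = j div m; s = j mod m in
             if a = 0 then A_mat m $$ (r, s)
             else if b + 1 = a then (if r = s then 1 else 0)
             else if b = p - 1 then (if r = s then -1 else 0)
             else 0)"
    unfolding A_mat_pp[OF assms(1)]
  proof (rule eq_matI; simp only: dim_row_mat dim_col_mat)
    fix i j assume i: "i < p ^ e" and j: "j < p ^ e"
    have lhs: "mat (p ^ e) (p ^ e) (\<lambda>(i, j). PC p e j ! i) $$ (i, j) = (PC p e0 j @ cz p (Suc e0) j) ! i"
      using i j by (simp add: e PC_Suc)
    have rhs: "mat (p ^ e) (p ^ e) (\<lambda>(i, j).
             let m = p ^ (e - 1); a = i div m; r = i mod m; b = j div m; s = j mod m in
             if a = 0 then A_mat m $$ (r, s)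
             else if b + 1 = a then (if r = s then 1 else 0)
             else if b = p - 1 then (if r = s then -1 else 0)
             else 0) $$ (i, j) =
          (if i div m = 0 then A_mat m $$ (i mod m, j mod m)
             else if j div m + 1 = i div m then (if i mod m = j mod m then 1 else 0)
             else if j div m = p - 1 then (if i mod m = j mod m then -1 else 0)
             else 0)"
      using i j by (simp add: e m_def Let_def)
    have key: "(PC p e0 j @ cz p (Suc e0) j) ! i = (if i div m = 0 then A_mat m $$ (i mod m, j mod m)
             else if j div m + 1 = i div m then (if i mod m = j mod m then 1 else 0)
             else if j div m = p - 1 then (if i mod m = j mod m then -1 else 0)
             else 0)"
    proof (cases "i < m")
      case True
      have "(PC p e0 j @ cz p (Suc e0) j) ! i = PC p e0 (j mod m) ! i"
        using True lenm by (simp add: nth_append PC_mod m_def)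
      also have "\<dots> = A_mat m $$ (i, j mod m)"
        using True m0 by (simp add: A_mat_pp[OF assms(1)] m_def)
      finally show ?thesis using True by simp
    next
      case False
      define a where "a = i div m"
      define r where "r = i mod m"
      define b where "b = j div m"
      define s where "s = j mod m"
      have ia: "i = a * m + r" by (simp add: a_def r_def)
      have jb: "j = b * m + s" by (simp add: b_def s_def)
      have rm: "r < m" "s < m" using m0 by (simp_all add: r_def s_def)
      have a1: "a \<ge> 1" using False m0 div_greater_zero_iff[of i m] by (simp add: a_def)
      have ap: "a < p" using i pe m0 by (simp add: a_def div_less_iff_less_mult)
      have bp: "b < p" using j pe m0 by (simp add: b_def div_less_iff_less_mult)
      have im: "i - m = (a - 1) * m + r" using ia a1 by (cases a) auto
      have jlt: "j < p * m" using j pe by simp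
      have imn: "i - m < n" using i pe pm False by simp
      have cz: "cz p (Suc e0) j = map (\<lambda>i. if j < n then (if i = j then 1 else 0) else (if i mod m = j - n then -1 else 0)) [0..<n]"
        using jlt by (simp add: cz_def Let_def m_def n_def)
      have "(PC p e0 j @ cz p (Suc e0) j) ! i = cz p (Suc e0) j ! (i - m)"
        using False lenm by (simp add: nth_append)
      also have "\<dots> = (if j < n then (if i - m = j then 1 else 0) else (if (i - m) mod m = j - n then -1 else 0))"
        using imn by (simp add: cz)
      also have "\<dots> = (if b + 1 = a then (if r = s then 1 else 0)
             else if b = p - 1 then (if r = s then -1 else 0) else 0)"
      proof (cases "b < p - 1")
        case True
        have "j < n"
        proof -
          have "j < b * m + m" using jb rm by simp
          also have "\<dots> = (b + 1) * m" by simp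
          also have "\<dots> \<le> (p - 1) * m" using True by (intro mult_right_mono) auto
          finally show ?thesis by (simp add: n_def)
        qed
        moreover have "(i - m = j) \<longleftrightarrow> (b + 1 = a \<and> r = s)"
          unfolding im jb using divmod_eq[OF rm, of "a - 1" b] a1 by auto
        ultimately show ?thesis using True by auto
      next
        case False
        then have b: "b = p - 1" using bp by simp
        have "j - n = s" using jb b by (simp add: n_def)
        moreover have "\<not> j < n" using jb b by (simp add: n_def)
        moreover have "(i - m) mod m = r" using im rm by simp
        moreover have "b + 1 \<noteq> a" using b ap p1 by simp
        ultimately show ?thesis using b by auto
      qed
      finally show ?thesis unfolding a_def[symmetric] r_def[symmetric] b_def[symmetric] s_def[symmetric]
        using a1 by simp
    qed
    then show "mat (p ^ e) (p ^ e) (\<lambda>(i, j). PC p e j ! i) $$ (i, j) = mat (p ^ e) (p ^ e) (\<lambda>(i, j).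
             let m = p ^ (e - 1); a = i div m; r = i mod m; b = j div m; s = j mod m in
             if a = 0 then A_mat m $$ (r, s)
             else if b + 1 = a then (if r = s then 1 else 0)
             else if b = p - 1 then (if r = s then -1 else 0)
             else 0) $$ (i, j)" using lhs rhs by simp
  qed
  show "A_mat 1 = mat 1 1 (\<lambda>_. 1)"
    using A_mat_pp[OF assms(1), of 0]
    by (auto simp: PC_def cz_def)
qed

end
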